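(* For a restless bandit as in the context, every $i\in N$ and $S\subseteq N^{\{0,1\}}$: $$b^{S\cup\{j\}}_i=b^S_i+w^S_j\,x^{1,S\cup\{j\}}_{ij},\quad j\in N^{\{0,1\}}\setminus S;\qquad b^S_i=b^{S\setminus\{j\}}_i+w^S_j\,x^{0,S\setminus\{j\}}_{ij},\quad j\in S.$$
   Context: Restless bandit: finite state space $N=N^{\{0,1\}}\cup N^{\{1\}}$ (disjoint); actions $a\in\{0,1\}$; transition probabilities $p^a_{ij}$ with $p^1_{ij}=p^0_{ij}$ for $i\in N^{\{1\}}$; discount factor $\beta\in(0,1)$; activity weights $\theta^1_j>0$. Stationary policies $u:N\to[0,1]$ with $u(i)=1$ on $N^{\{1\}}$. $b^u_i=E^u_i[\sum_{t\ge0}\theta^1_{X(t)}a(t)\beta^t]$, $x^{a,u}_{ij}=E^u_i[\sum_{t\ge0}1\{X(t)=j,a(t)=a\}\beta^t]$. For $S\subseteq N^{\{0,1\}}$ the $S$-active policy is active on $S\cup N^{\{1\}}$ and passive elsewhere; superscript $S$ denotes its measures. Marginal workloads: $w^S_i=\theta^1_i1\{i\in N^{\{0,1\}}\}+\beta\sum_{j}(p^1_{ij}-p^0_{ij})b^S_j$. *)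

theory Defs
  imports Complex_Main
begin

(* State space N = UNIV of a finite type 'i; N^{0,1} = N01, N^{1} = - N01.
   Actions are encoded as nat 0 / 1; p a i j is the transition probability p^a_ij. *)

definition trans_pol :: "(nat \<Rightarrow> 'i \<Rightarrow> 'i \<Rightarrow> real) \<Rightarrow> ('i \<Rightarrow> real) \<Rightarrow> 'i \<Rightarrow> 'i \<Rightarrow> real" where
  "trans_pol p u i j = (1 - u i) * p 0 i j + u i * p 1 i j"

fun kstep :: "('i::finite \<Rightarrow> 'i \<Rightarrow> real) \<Rightarrow> nat \<Rightarrow> 'i \<Rightarrow> 'i \<Rightarrow> real" where
  "kstep P 0 i j = (if i = j then 1 else 0)"
| "kstep P (Suc n) i j = (\<Sum>k\<in>UNIV. P i k * kstep P n k j)"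

definition act_prob :: "('i \<Rightarrow> real) \<Rightarrow> nat \<Rightarrow> 'i \<Rightarrow> real" where
  "act_prob u a j = (if a = 1 then u j else 1 - u j)"

(* x^{a,u}_{ij} = E^u_i [ sum_t 1{X(t)=j, a(t)=a} beta^t ] *)
definition occ :: "(nat \<Rightarrow> 'i::finite \<Rightarrow> 'i \<Rightarrow> real) \<Rightarrow> real \<Rightarrow> ('i \<Rightarrow> real) \<Rightarrow> nat \<Rightarrow> 'i \<Rightarrow> 'i \<Rightarrow> real" where
  "occ p \<beta> u a i j = (\<Sum>t. \<beta> ^ t * kstep (trans_pol p u) t i j * act_prob u a j)"

(* b^u_i = E^u_i [ sum_t theta^1_{X(t)} a(t) beta^t ] *)
definition work :: "(nat \<Rightarrow> 'i::finite \<Rightarrow> 'i \<Rightarrow> real) \<Rightarrow> real \<Rightarrow> ('i \<Rightarrow> real) \<Rightarrow> ('i \<Rightarrow> real) \<Rightarrow> 'i \<Rightarrow> real" where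
  "work p \<beta> \<theta> u i = (\<Sum>j\<in>UNIV. \<theta> j * occ p \<beta> u 1 i j)"

definition act_pol :: "'i set \<Rightarrow> 'i set \<Rightarrow> 'i \<Rightarrow> real" where
  "act_pol N01 S j = (if j \<in> S \<or> j \<notin> N01 then 1 else 0)"

definition mwork :: "(nat \<Rightarrow> 'i::finite \<Rightarrow> 'i \<Rightarrow> real) \<Rightarrow> real \<Rightarrow> ('i \<Rightarrow> real) \<Rightarrow> 'i set \<Rightarrow> 'i set \<Rightarrow> 'i \<Rightarrow> real" where
  "mwork p \<beta> \<theta> N01 S i =
     (if i \<in> N01 then \<theta> i else 0)
     + \<beta> * (\<Sum>j\<in>UNIV. (p 1 i j - p 0 i j) * work p \<beta> \<theta> (act_pol N01 S) j)"

end

theory Submission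
  imports Defs
begin

definition GG :: "('i::finite \<Rightarrow> 'i \<Rightarrow> real) \<Rightarrow> real \<Rightarrow> 'i \<Rightarrow> 'i \<Rightarrow> real" where
  "GG P \<beta> i j = (\<Sum>t. \<beta> ^ t * kstep P t i j)"

definition stoch :: "('i::finite \<Rightarrow> 'i \<Rightarrow> real) \<Rightarrow> bool" where
  "stoch P \<longleftrightarrow> (\<forall>i k. P i k \<ge> 0) \<and> (\<forall>i. (\<Sum>k\<in>UNIV. P i k) = 1)"

lemma kstep_props:
  assumes "stoch P"
  shows "(\<forall>i j. kstep P n i j \<ge> 0) \<and> (\<forall>i. (\<Sum>j\<in>UNIV. kstep P n i j) = 1)"
proof (induction n)
  case 0
  then show ?case by simp
next
  case (Suc n)
  have nn: "\<And>i k. P i k \<ge> 0" and s: "\<And>i. (\<Sum>k\<in>UNIV. P i k) = 1"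
    using assms unfolding stoch_def by auto
  have "\<forall>i j. kstep P (Suc n) i j \<ge> 0"
  proof (intro allI)
    fix i j show "kstep P (Suc n) i j \<ge> 0"
      using Suc nn by (simp only: kstep.simps) (intro sum_nonneg mult_nonneg_nonneg; blast)
  qed
  moreover have "(\<Sum>j\<in>UNIV. kstep P (Suc n) i j) = 1" for i
  proof -
    have "(\<Sum>j\<in>UNIV. kstep P (Suc n) i j) = (\<Sum>k\<in>UNIV. P i k * (\<Sum>j\<in>UNIV. kstep P n k j))"
      by (simp only: kstep.simps sum_distrib_left mult.assoc) (rule sum.swap)
    also have "\<dots> = 1" using Suc s by simp
    finally show ?thesis .
  qed
  ultimately show ?case by blast
qed

lemma kstep_le1:
  assumes "stoch P"
  shows "kstep P n i j \<le> 1"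
proof -
  have "kstep P n i j \<le> (\<Sum>j\<in>UNIV. kstep P n i j)"
    using kstep_props[OF assms] by (intro member_le_sum) auto
  then show ?thesis using kstep_props[OF assms] by simp
qed

lemma GG_summable:
  assumes "stoch P" "0 \<le> \<beta>" "\<beta> < 1"
  shows "summable (\<lambda>t. \<beta> ^ t * kstep P t i j)"
proof (rule summable_comparison_test[where g="\<lambda>t. \<beta> ^ t"])
  show "\<exists>N. \<forall>n\<ge>N. norm (\<beta> ^ n * kstep P n i j) \<le> \<beta> ^ n"
    using kstep_props[OF assms(1)] kstep_le1[OF assms(1)] assms(2)
    by (auto simp: abs_mult intro!: mult_left_le)
  show "summable (\<lambda>t. \<beta> ^ t)" using assms by (intro summable_geometric) auto
qed

lemma GG_eq:
  assumes "stoch P" "0 \<le> \<beta>" "\<beta> < 1"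
  shows "GG P \<beta> i j = (if i = j then 1 else 0) + \<beta> * (\<Sum>k\<in>UNIV. P i k * GG P \<beta> k j)"
proof -
  have sm: "\<And>i j. summable (\<lambda>t. \<beta> ^ t * kstep P t i j)" using GG_summable[OF assms] .
  have "(\<Sum>t. \<beta> ^ Suc t * kstep P (Suc t) i j) = GG P \<beta> i j - (if i = j then 1 else 0)"
    unfolding GG_def using suminf_split_head[OF sm[of i j]] by simp
  moreover have "(\<Sum>t. \<beta> ^ Suc t * kstep P (Suc t) i j)
      = (\<Sum>t. \<Sum>k\<in>UNIV. \<beta> * (P i k * (\<beta> ^ t * kstep P t k j)))"
    by (simp add: sum_distrib_left mult_ac)
  moreover have "\<dots> = (\<Sum>k\<in>UNIV. \<Sum>t. \<beta> * (P i k * (\<beta> ^ t * kstep P t k j)))"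
    by (rule suminf_sum) (intro summable_mult sm)
  moreover have "\<dots> = (\<Sum>k\<in>UNIV. \<beta> * (P i k * GG P \<beta> k j))"
    unfolding GG_def by (intro sum.cong refl) (simp add: suminf_mult sm summable_mult)
  ultimately show ?thesis by (simp add: sum_distrib_left)
qed

lemma uniq:
  assumes "stoch P" "0 \<le> \<beta>" "\<beta> < 1"
    and e: "\<And>i. e i = \<beta> * (\<Sum>l\<in>UNIV. P i l * e l)"
  shows "e i = 0"
proof -
  define M where "M = Max (range (\<lambda>l. \<bar>e l\<bar>))"
  have Mge: "\<bar>e l\<bar> \<le> M" for l unfolding M_def by (rule Max_ge) auto
  have "\<bar>e k\<bar> \<le> \<beta> * M" for k
  proof -
    have "\<bar>e k\<bar> = \<beta> * \<bar>\<Sum>l\<in>UNIV. P k l * e l\<bar>" using e[of k] assms(2) by (simp add: abs_mult)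
    also have "\<dots> \<le> \<beta> * (\<Sum>l\<in>UNIV. P k l * M)"
    proof (intro mult_left_mono assms(2))
      have "\<bar>\<Sum>l\<in>UNIV. P k l * e l\<bar> \<le> (\<Sum>l\<in>UNIV. \<bar>P k l * e l\<bar>)" by (rule sum_abs)
      also have "\<dots> \<le> (\<Sum>l\<in>UNIV. P k l * M)"
        using assms(1) Mge unfolding stoch_def
        by (intro sum_mono) (simp add: abs_mult mult_left_mono)
      finally show "\<bar>\<Sum>l\<in>UNIV. P k l * e l\<bar> \<le> (\<Sum>l\<in>UNIV. P k l * M)" .
    qed
    also have "\<dots> = \<beta> * M" using assms(1) unfolding stoch_def by (simp add: sum_distrib_right[symmetric])
    finally show ?thesis .
  qed
  then have "M \<le> \<beta> * M" unfolding M_def by (subst Max_le_iff) auto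
  moreover have "M \<ge> 0" using Mge[of i] by simp
  ultimately have "M = 0" using assms(3)
    by (metis antisym mult_le_cancel_right1 not_le)
  then show ?thesis using Mge[of i] by simp
qed

lemma trans_stoch:
  assumes "\<And>a i j. a \<in> {0, 1} \<Longrightarrow> p a i j \<ge> 0"
    and "\<And>a i. a \<in> {0, 1} \<Longrightarrow> (\<Sum>j\<in>UNIV. p a i j) = 1"
    and "\<And>k. 0 \<le> u k \<and> u k \<le> 1"
  shows "stoch (trans_pol p u)"
  unfolding stoch_def trans_pol_def
proof (intro conjI allI)
  fix i k
  show "0 \<le> (1 - u i) * p 0 i k + u i * p 1 i k"
    using assms(1)[of 0 i k] assms(1)[of 1 i k] assms(3)[of i] by simp
next
  fix i
  show "(\<Sum>k\<in>UNIV. (1 - u i) * p 0 i k + u i * p 1 i k) = 1"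
    using assms(2)[of 0 i] assms(2)[of 1 i]
    by (simp add: sum.distrib sum_distrib_left[symmetric])
qed

lemma occ_GG:
  assumes "stoch (trans_pol p u)" "0 \<le> \<beta>" "\<beta> < 1"
  shows "occ p \<beta> u a i j = GG (trans_pol p u) \<beta> i j * act_prob u a j"
  unfolding occ_def GG_def
  by (rule suminf_mult2[symmetric]) (rule GG_summable[OF assms])

lemma work_GG:
  assumes "stoch (trans_pol p u)" "0 \<le> \<beta>" "\<beta> < 1"
  shows "work p \<beta> \<theta> u i = (\<Sum>j\<in>UNIV. \<theta> j * u j * GG (trans_pol p u) \<beta> i j)"
  unfolding work_def using occ_GG[OF assms]
  by (simp add: act_prob_def mult_ac)

lemma bellman:
  assumes "stoch (trans_pol p u)" "0 \<le> \<beta>" "\<beta> < 1"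
  shows "work p \<beta> \<theta> u i = \<theta> i * u i + \<beta> * (\<Sum>l\<in>UNIV. trans_pol p u i l * work p \<beta> \<theta> u l)"
proof -
  let ?P = "trans_pol p u"
  have "work p \<beta> \<theta> u i = (\<Sum>j\<in>UNIV. \<theta> j * u j * ((if i = j then 1 else 0) + \<beta> * (\<Sum>k\<in>UNIV. ?P i k * GG ?P \<beta> k j)))"
    unfolding work_GG[OF assms] by (subst GG_eq[OF assms]) (rule refl)
  also have "\<dots> = (\<Sum>j\<in>UNIV. (if i = j then \<theta> j * u j else 0)) + (\<Sum>j\<in>UNIV. \<Sum>k\<in>UNIV. \<beta> * (?P i k * (\<theta> j * u j * GG ?P \<beta> k j)))"
    unfolding sum.distrib[symmetric] by (intro sum.cong refl) (simp add: distrib_left sum_distrib_left mult_ac)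
  also have "\<dots> = \<theta> i * u i + (\<Sum>j\<in>UNIV. \<Sum>k\<in>UNIV. \<beta> * (?P i k * (\<theta> j * u j * GG ?P \<beta> k j)))"
    by simp
  also have "\<dots> = \<theta> i * u i + \<beta> * (\<Sum>l\<in>UNIV. ?P i l * work p \<beta> \<theta> u l)"
    unfolding work_GG[OF assms] by (subst sum.swap) (simp add: sum_distrib_left)
  finally show ?thesis .
qed

lemma diff_formula:
  assumes "stoch (trans_pol p u)" "stoch (trans_pol p v)" "0 \<le> \<beta>" "\<beta> < 1"
  shows "work p \<beta> \<theta> v i - work p \<beta> \<theta> u i =
    (\<Sum>k\<in>UNIV. GG (trans_pol p v) \<beta> i k *
       (\<theta> k * (v k - u k) + \<beta> * (\<Sum>l\<in>UNIV. (trans_pol p v k l - trans_pol p u k l) * work p \<beta> \<theta> u l)))"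
proof -
  let ?Pu = "trans_pol p u" and ?Pv = "trans_pol p v"
  define d where "d k = \<theta> k * (v k - u k) + \<beta> * (\<Sum>l\<in>UNIV. (?Pv k l - ?Pu k l) * work p \<beta> \<theta> u l)" for k
  define c where "c k = work p \<beta> \<theta> v k - work p \<beta> \<theta> u k" for k
  define g where "g k = (\<Sum>m\<in>UNIV. GG ?Pv \<beta> k m * d m)" for k
  have c_eq: "c k = d k + \<beta> * (\<Sum>l\<in>UNIV. ?Pv k l * c l)" for k
    unfolding c_def d_def
    apply (subst bellman[OF assms(2-4)], subst bellman[OF assms(1) assms(3-4)])
    by (simp add: algebra_simps sum_subtractf sum.distrib)
  have g_eq: "g k = d k + \<beta> * (\<Sum>l\<in>UNIV. ?Pv k l * g l)" for k
  proof -
    have "g k = (\<Sum>m\<in>UNIV. ((if k = m then 1 else 0) + \<beta> * (\<Sum>l\<in>UNIV. ?Pv k l * GG ?Pv \<beta> l m)) * d m)"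
      unfolding g_def by (subst GG_eq[OF assms(2-4)]) (rule refl)
    also have "\<dots> = (\<Sum>m\<in>UNIV. (if k = m then d m else 0)) + (\<Sum>m\<in>UNIV. \<Sum>l\<in>UNIV. \<beta> * (?Pv k l * (GG ?Pv \<beta> l m * d m)))"
      unfolding sum.distrib[symmetric] by (intro sum.cong refl) (simp add: distrib_right distrib_left sum_distrib_left sum_distrib_right mult_ac)
    also have "\<dots> = d k + (\<Sum>m\<in>UNIV. \<Sum>l\<in>UNIV. \<beta> * (?Pv k l * (GG ?Pv \<beta> l m * d m)))"
      by simp
    also have "\<dots> = d k + \<beta> * (\<Sum>l\<in>UNIV. ?Pv k l * g l)"
      unfolding g_def by (subst sum.swap) (simp add: sum_distrib_left)
    finally show ?thesis .
  qed
  have "c i - g i = 0"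
  proof (rule uniq[OF assms(2-4), of "\<lambda>k. c k - g k"])
    fix k
    show "c k - g k = \<beta> * (\<Sum>l\<in>UNIV. ?Pv k l * (c l - g l))"
      by (subst c_eq[of k], subst g_eq[of k]) (simp add: algebra_simps sum_subtractf)
  qed
  then show ?thesis unfolding c_def g_def d_def by simp
qed


lemma act_pol_stoch:
  assumes "\<And>a i j. a \<in> {0, 1} \<Longrightarrow> p a i j \<ge> 0"
    and "\<And>a i. a \<in> {0, 1} \<Longrightarrow> (\<Sum>j\<in>UNIV. p a i j) = 1"
  shows "stoch (trans_pol p (act_pol N01 S))"
  by (rule trans_stoch[OF assms]) (auto simp: act_pol_def)

theorem corollary1:
  fixes p :: "nat \<Rightarrow> 'i::finite \<Rightarrow> 'i \<Rightarrow> real"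
    and \<beta> :: real and \<theta> :: "'i \<Rightarrow> real" and N01 :: "'i set"
  assumes p_nonneg: "\<And>a i j. a \<in> {0, 1} \<Longrightarrow> p a i j \<ge> 0"
    and p_stoch: "\<And>a i. a \<in> {0, 1} \<Longrightarrow> (\<Sum>j\<in>UNIV. p a i j) = 1"
    and p_N1: "\<And>i j. i \<notin> N01 \<Longrightarrow> p 1 i j = p 0 i j"
    and beta: "0 < \<beta>" "\<beta> < 1"
    and theta: "\<And>j. \<theta> j > 0"
    and S: "S \<subseteq> N01"
  shows "(\<forall>j \<in> N01 - S.
            work p \<beta> \<theta> (act_pol N01 (S \<union> {j})) i
              = work p \<beta> \<theta> (act_pol N01 S) i
                + mwork p \<beta> \<theta> N01 S j * occ p \<beta> (act_pol N01 (S \<union> {j})) 1 i j)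
       \<and> (\<forall>j \<in> S.
            work p \<beta> \<theta> (act_pol N01 S) i
              = work p \<beta> \<theta> (act_pol N01 (S - {j})) i
                + mwork p \<beta> \<theta> N01 S j * occ p \<beta> (act_pol N01 (S - {j})) 0 i j)"
proof (intro conjI ballI)
  have st: "\<And>T. stoch (trans_pol p (act_pol N01 T))" by (rule act_pol_stoch[OF p_nonneg p_stoch])
  have b0: "0 \<le> \<beta>" using beta by simp
  fix j assume j: "j \<in> N01 - S"
  let ?u = "act_pol N01 S" and ?v = "act_pol N01 (S \<union> {j})"
  have d: "\<theta> k * (?v k - ?u k) + \<beta> * (\<Sum>l\<in>UNIV. (trans_pol p ?v k l - trans_pol p ?u k l) * work p \<beta> \<theta> ?u l)
     = (if k = j then mwork p \<beta> \<theta> N01 S j else 0)" for k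
    using j by (cases "k = j") (auto simp: act_pol_def trans_pol_def mwork_def)
  have "work p \<beta> \<theta> ?v i - work p \<beta> \<theta> ?u i = (\<Sum>k\<in>UNIV. GG (trans_pol p ?v) \<beta> i k * (if k = j then mwork p \<beta> \<theta> N01 S j else 0))"
    unfolding diff_formula[OF st st b0 beta(2)] d by (rule refl)
  also have "\<dots> = GG (trans_pol p ?v) \<beta> i j * mwork p \<beta> \<theta> N01 S j"
    by (simp add: if_distrib cong: if_cong)
  also have "\<dots> = mwork p \<beta> \<theta> N01 S j * occ p \<beta> ?v 1 i j"
    unfolding occ_GG[OF st b0 beta(2)] by (simp add: act_prob_def act_pol_def)
  finally show "work p \<beta> \<theta> ?v i = work p \<beta> \<theta> ?u i + mwork p \<beta> \<theta> N01 S j * occ p \<beta> ?v 1 i j"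
    by simp
next
  have st: "\<And>T. stoch (trans_pol p (act_pol N01 T))" by (rule act_pol_stoch[OF p_nonneg p_stoch])
  have b0: "0 \<le> \<beta>" using beta by simp
  fix j assume j: "j \<in> S"
  then have jN: "j \<in> N01" using S by auto
  let ?u = "act_pol N01 S" and ?v = "act_pol N01 (S - {j})"
  have d: "\<theta> k * (?v k - ?u k) + \<beta> * (\<Sum>l\<in>UNIV. (trans_pol p ?v k l - trans_pol p ?u k l) * work p \<beta> \<theta> ?u l)
     = (if k = j then - mwork p \<beta> \<theta> N01 S j else 0)" for k
    using j jN by (cases "k = j") (auto simp: act_pol_def trans_pol_def mwork_def sum_subtractf algebra_simps)
  have "work p \<beta> \<theta> ?v i - work p \<beta> \<theta> ?u i = (\<Sum>k\<in>UNIV. GG (trans_pol p ?v) \<beta> i k * (if k = j then - mwork p \<beta> \<theta> N01 S j else 0))"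
    unfolding diff_formula[OF st st b0 beta(2)] d by (rule refl)
  also have "\<dots> = - GG (trans_pol p ?v) \<beta> i j * mwork p \<beta> \<theta> N01 S j"
    by (simp add: if_distrib cong: if_cong)
  also have "\<dots> = - mwork p \<beta> \<theta> N01 S j * occ p \<beta> ?v 0 i j"
    unfolding occ_GG[OF st b0 beta(2)] using jN by (simp add: act_prob_def act_pol_def)
  finally show "work p \<beta> \<theta> ?u i = work p \<beta> \<theta> ?v i + mwork p \<beta> \<theta> N01 S j * occ p \<beta> ?v 0 i j"
    by simp
qed

end
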